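(* Let $\phi_0 := 1 - \dfrac{(a\beta_0 - \sqrt{r})^2}{a\mu + r}$ and $\phi_1 := \dfrac{a^2\beta_0^2 + a\mu}{a\mu + r}$. Then: (1) $a\beta_0 - 2\sqrt{r} < \dfrac{\mu}{\beta_0}$ if and only if $\phi_0 > 0$; (2) $\mathcal{R}_0 > \phi_1$; (3) if $a\beta_0 < \sqrt{r}$, then $\phi_1 < 1$; (4) $a\beta_0 < \sqrt{r}$ if and only if $\phi_1 < \phi_0$.
   Context: Consider the autonomous planar system $\dot S = S(A-S) - \beta_0 I S$, $\dot I = \beta_0 I S - \mu I - \dfrac{rI}{a+I}$ on $(\mathbb{R}_0^+)^2$, with all parameters $A, r, \beta_0, a, \mu$ positive (here $\mu$ denotes the sum of the natural death rate and the disease death rate). The basic reproduction number is $\mathcal{R}_0 = \dfrac{\beta_0 A}{\mu + r/a}$. It is assumed that $S(t)\le A$ for all $t\ge 0$. Let $\Delta = \left(a\beta_0 + A - \frac{\mu}{\beta_0}\right)^2 - 4r > 0$, so that the system has two endemic equilibria $E_3=(S_3,I_3)$, $E_4=(S_4,I_4)$ with $S_{3,4} = \dfrac{a\beta_0 + A + \frac{\mu}{\beta_0} \mp \sqrt{\Delta}}{2}$, $I_j = (A-S_j)/\beta_0$, and these satisfy $S_3 < S_4 < A$ (this is used for item (2)). *)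

theory Defs
  imports Complex_Main
begin

definition R0 :: "real \<Rightarrow> real \<Rightarrow> real \<Rightarrow> real \<Rightarrow> real \<Rightarrow> real" where
  "R0 A r \<beta>0 a \<mu> = \<beta>0 * A / (\<mu> + r / a)"

definition Delta :: "real \<Rightarrow> real \<Rightarrow> real \<Rightarrow> real \<Rightarrow> real \<Rightarrow> real" where
  "Delta A r \<beta>0 a \<mu> = (a * \<beta>0 + A - \<mu> / \<beta>0)\<^sup>2 - 4 * r"

definition S3 :: "real \<Rightarrow> real \<Rightarrow> real \<Rightarrow> real \<Rightarrow> real \<Rightarrow> real" where
  "S3 A r \<beta>0 a \<mu> = (a * \<beta>0 + A + \<mu> / \<beta>0 - sqrt (Delta A r \<beta>0 a \<mu>)) / 2"

definition S4 :: "real \<Rightarrow> real \<Rightarrow> real \<Rightarrow> real \<Rightarrow> real \<Rightarrow> real" where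
  "S4 A r \<beta>0 a \<mu> = (a * \<beta>0 + A + \<mu> / \<beta>0 + sqrt (Delta A r \<beta>0 a \<mu>)) / 2"

definition phi0 :: "real \<Rightarrow> real \<Rightarrow> real \<Rightarrow> real \<Rightarrow> real" where
  "phi0 r \<beta>0 a \<mu> = 1 - (a * \<beta>0 - sqrt r)\<^sup>2 / (a * \<mu> + r)"

definition phi1 :: "real \<Rightarrow> real \<Rightarrow> real \<Rightarrow> real \<Rightarrow> real" where
  "phi1 r \<beta>0 a \<mu> = (a\<^sup>2 * \<beta>0\<^sup>2 + a * \<mu>) / (a * \<mu> + r)"

end

theory Submission
  imports Defs
begin

theorem lemma5p2:
  fixes A r \<beta>0 a \<mu> :: real
  assumes "A > 0" and "r > 0" and "\<beta>0 > 0" and "a > 0" and "\<mu> > 0"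
    and "Delta A r \<beta>0 a \<mu> > 0"
    and "S3 A r \<beta>0 a \<mu> < S4 A r \<beta>0 a \<mu>" and "S4 A r \<beta>0 a \<mu> < A"
  shows "(a * \<beta>0 - 2 * sqrt r < \<mu> / \<beta>0 \<longleftrightarrow> phi0 r \<beta>0 a \<mu> > 0)
       \<and> R0 A r \<beta>0 a \<mu> > phi1 r \<beta>0 a \<mu>
       \<and> (a * \<beta>0 < sqrt r \<longrightarrow> phi1 r \<beta>0 a \<mu> < 1)
       \<and> (a * \<beta>0 < sqrt r \<longleftrightarrow> phi1 r \<beta>0 a \<mu> < phi0 r \<beta>0 a \<mu>)"
proof -
  define s where "s = sqrt r"
  have s0: "s > 0" using assms(2) by (simp add: s_def)
  have rs: "r = s^2" using assms(2) by (simp add: s_def)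
  have D: "a * \<mu> + r > 0" using assms by (simp add: add_pos_pos)
  have ab: "a * \<beta>0 > 0" using assms by simp
  have p0: "phi0 r \<beta>0 a \<mu> = (a*\<mu> + r - (a * \<beta>0 - s)\<^sup>2) / (a * \<mu> + r)"
    unfolding phi0_def s_def using D by (simp add: field_simps)
  have c1: "a * \<beta>0 - 2 * s < \<mu> / \<beta>0 \<longleftrightarrow> (a * \<beta>0 - s)\<^sup>2 < a*\<mu> + r"
  proof -
    have "a * \<beta>0 - 2 * s < \<mu> / \<beta>0 \<longleftrightarrow> a*\<beta>0*(a * \<beta>0 - 2 * s) < a*\<beta>0*(\<mu> / \<beta>0)"
      using ab by (rule mult_less_cancel_left_pos[symmetric])
    also have "\<dots> \<longleftrightarrow> (a * \<beta>0 - s)\<^sup>2 < a*\<mu> + r"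
      using assms(3) by (simp add: rs power2_eq_square algebra_simps)
    finally show ?thesis .
  qed
  have 1: "a * \<beta>0 - 2 * sqrt r < \<mu> / \<beta>0 \<longleftrightarrow> phi0 r \<beta>0 a \<mu> > 0"
    using c1 p0 D by (simp add: s_def divide_pos_pos zero_less_divide_iff)
  have sq: "sqrt (Delta A r \<beta>0 a \<mu>) > 0" using assms(6) by simp
  have "a*\<beta>0 + A + \<mu>/\<beta>0 + sqrt (Delta A r \<beta>0 a \<mu>) < 2*A"
    using assms(8) unfolding S4_def by (simp add: divide_less_eq)
  hence A1: "a*\<beta>0 + \<mu>/\<beta>0 < A" using sq by linarith
  hence A2: "a*\<beta>0*\<beta>0 + \<mu> < A*\<beta>0" using assms(3) by (simp add: field_simps)
  have R: "R0 A r \<beta>0 a \<mu> = a*\<beta>0*A / (a * \<mu> + r)"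
    unfolding R0_def using assms(4) by (simp add: field_simps)
  have 2: "R0 A r \<beta>0 a \<mu> > phi1 r \<beta>0 a \<mu>"
    unfolding R phi1_def using D
  proof (subst divide_strict_right_mono)
    have "a*(a*\<beta>0*\<beta>0 + \<mu>) < a*(A*\<beta>0)" using A2 assms(4) by simp
    thus "a\<^sup>2 * \<beta>0\<^sup>2 + a * \<mu> < a * \<beta>0 * A" by (simp add: power2_eq_square algebra_simps)
  qed auto
  have e3: "phi1 r \<beta>0 a \<mu> < 1 \<longleftrightarrow> (a*\<beta>0)^2 < s^2"
    unfolding phi1_def using D by (simp add: rs power_mult_distrib)
  have e4: "phi1 r \<beta>0 a \<mu> < phi0 r \<beta>0 a \<mu> \<longleftrightarrow> a*\<beta>0*(a*\<beta>0) < a*\<beta>0*s"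
  proof -
    have "phi1 r \<beta>0 a \<mu> < phi0 r \<beta>0 a \<mu> \<longleftrightarrow>
      a\<^sup>2 * \<beta>0\<^sup>2 + a * \<mu> < a*\<mu> + r - (a * \<beta>0 - s)\<^sup>2"
      unfolding phi1_def p0 using D by (simp add: divide_less_cancel)
    also have "\<dots> \<longleftrightarrow> a*\<beta>0*(a*\<beta>0) < a*\<beta>0*s"
    proof -
      have eq: "a*\<mu> + r - (a * \<beta>0 - s)\<^sup>2 - (a\<^sup>2 * \<beta>0\<^sup>2 + a * \<mu>) = 2*(a*\<beta>0*s) - 2*(a*\<beta>0*(a*\<beta>0))"
        unfolding rs power2_eq_square by (simp add: algebra_simps)
      show ?thesis using eq by (smt (verit))
    qed
    finally show ?thesis .
  qed
  have lt: "a*\<beta>0 < s \<longleftrightarrow> (a*\<beta>0)^2 < s^2"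
  proof
    assume "a*\<beta>0 < s" thus "(a*\<beta>0)^2 < s^2" using ab by (simp add: power_strict_mono)
  next
    assume "(a*\<beta>0)^2 < s^2" thus "a*\<beta>0 < s" using s0 power_less_imp_less_base[of "a*\<beta>0" 2 s] by simp
  qed
  have 3: "a*\<beta>0 < s \<longrightarrow> phi1 r \<beta>0 a \<mu> < 1" using e3 lt by blast
  have 4: "a*\<beta>0 < s \<longleftrightarrow> phi1 r \<beta>0 a \<mu> < phi0 r \<beta>0 a \<mu>"
    using e4 mult_less_cancel_left_pos[OF ab] by blast
  show ?thesis using 1 2 3 4 unfolding s_def by blast
qed

end
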